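(* For an $E$-linear code $C$ of length $2n$, $C^{\perp_{S_R}}=C^{\perp_S}$ if and only if $C$ is right symplectic nice.
   Context: $E=\langle \kappa,\tau \mid 2\kappa=2\tau=0,\ \kappa^2=\kappa,\ \tau^2=\tau,\ \kappa\tau=\kappa,\ \tau\kappa=\tau\rangle$ is the non-unital ring $\{0,\kappa,\tau,\zeta\}$ ($|E|=4$), $\zeta=\kappa+\tau$, with $e\kappa=e\tau=e$, $e\zeta=0$ for all $e\in E$. An $E$-linear code of length $2n$ is a left $E$-submodule $C\subseteq E^{2n}$. Symplectic inner product: for $x=(u|v),y=(u'|v')\in E^{2n}$, $\langle x,y\rangle_s=\sum_i u_iv'_i+\sum_i v_iu'_i$. $C^{\perp_{S_L}}=\{z\in E^{2n}:\langle z,w\rangle_s=0\ \forall w\in C\}$, $C^{\perp_{S_R}}=\{z\in E^{2n}:\langle w,z\rangle_s=0\ \forall w\in C\}$, $C^{\perp_S}=C^{\perp_{S_L}}\cap C^{\perp_{S_R}}$. $C$ is right symplectic nice if $|C|\,|C^{\perp_{S_R}}|=|E|^{2n}$. *)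

theory Defs
  imports Main
begin

text \<open>The non-unital ring E = {0, kappa, tau, zeta}, zeta = kappa + tau.
  Additively E is (Z/2)^2 with basis kappa, tau; multiplication:
  e * kappa = e * tau = e, e * zeta = 0, e * 0 = 0.\<close>

datatype E = E0 | Kappa | Tau | Zeta

instantiation E :: ring
begin

definition zero_E :: E where "zero_E = E0"

fun plus_E :: "E \<Rightarrow> E \<Rightarrow> E" where
  "plus_E E0 y = y"
| "plus_E x E0 = x"
| "plus_E Kappa Kappa = E0"
| "plus_E Tau Tau = E0"
| "plus_E Zeta Zeta = E0"
| "plus_E Kappa Tau = Zeta"
| "plus_E Tau Kappa = Zeta"
| "plus_E Kappa Zeta = Tau"
| "plus_E Zeta Kappa = Tau"
| "plus_E Tau Zeta = Kappa"
| "plus_E Zeta Tau = Kappa"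

definition uminus_E :: "E \<Rightarrow> E" where "uminus_E x = x"

definition minus_E :: "E \<Rightarrow> E \<Rightarrow> E" where "minus_E x y = x + y"

definition times_E :: "E \<Rightarrow> E \<Rightarrow> E" where
  "times_E x y = (if y = Kappa \<or> y = Tau then x else E0)"

instance
proof
  fix a b c :: E
  show "a + b + c = a + (b + c)" by (cases a; cases b; cases c) auto
  show "a + b = b + a" by (cases a; cases b) auto
  show "0 + a = a" by (simp add: zero_E_def)
  show "- a + a = 0" by (cases a) (auto simp: uminus_E_def zero_E_def)
  show "a - b = a + - b" by (simp add: minus_E_def uminus_E_def)
  show "a * b * c = a * (b * c)" by (cases a; cases b; cases c) (auto simp: times_E_def)
  show "(a + b) * c = a * c + b * c" by (cases a; cases b; cases c) (auto simp: times_E_def)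
  show "a * (b + c) = a * b + a * c" by (cases a; cases b; cases c) (auto simp: times_E_def)
qed

end

text \<open>Vectors of E^{2n}: functions nat => E vanishing outside {0..<2n};
  a vector x is written (u|v) with u_i = x i and v_i = x (n+i) for i < n.\<close>

definition Espace :: "nat \<Rightarrow> (nat \<Rightarrow> E) set" where
  "Espace n = {x. \<forall>i\<ge>2*n. x i = 0}"

definition symp :: "nat \<Rightarrow> (nat \<Rightarrow> E) \<Rightarrow> (nat \<Rightarrow> E) \<Rightarrow> E" where
  "symp n x y = (\<Sum>i<n. x i * y (n+i)) + (\<Sum>i<n. x (n+i) * y i)"

definition E_linear_code :: "nat \<Rightarrow> (nat \<Rightarrow> E) set \<Rightarrow> bool" where
  "E_linear_code n C \<longleftrightarrow> C \<subseteq> Espace n \<and> (\<lambda>_. 0) \<in> C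
     \<and> (\<forall>x\<in>C. \<forall>y\<in>C. (\<lambda>i. x i + y i) \<in> C)
     \<and> (\<forall>e::E. \<forall>x\<in>C. (\<lambda>i. e * x i) \<in> C)"

definition symp_perp_L :: "nat \<Rightarrow> (nat \<Rightarrow> E) set \<Rightarrow> (nat \<Rightarrow> E) set" where
  "symp_perp_L n C = {z \<in> Espace n. \<forall>w\<in>C. symp n z w = 0}"

definition symp_perp_R :: "nat \<Rightarrow> (nat \<Rightarrow> E) set \<Rightarrow> (nat \<Rightarrow> E) set" where
  "symp_perp_R n C = {z \<in> Espace n. \<forall>w\<in>C. symp n w z = 0}"

definition symp_perp :: "nat \<Rightarrow> (nat \<Rightarrow> E) set \<Rightarrow> (nat \<Rightarrow> E) set" where
  "symp_perp n C = symp_perp_L n C \<inter> symp_perp_R n C"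

definition right_symplectic_nice :: "nat \<Rightarrow> (nat \<Rightarrow> E) set \<Rightarrow> bool" where
  "right_symplectic_nice n C \<longleftrightarrow> card C * card (symp_perp_R n C) = card (UNIV :: E set) ^ (2*n)"

end

theory Submission imports Defs "HOL-Library.Function_Algebras" "HOL-Library.FuncSet" begin

lemma fiber_card:
  fixes f :: "'a::ab_group_add \<Rightarrow> 'b::ab_group_add"
  assumes fin: "finite V"
    and addc: "\<And>x y. x \<in> V \<Longrightarrow> y \<in> V \<Longrightarrow> x + y \<in> V"
    and subc: "\<And>x y. x \<in> V \<Longrightarrow> y \<in> V \<Longrightarrow> x - y \<in> V"
    and hom: "\<And>x y. x \<in> V \<Longrightarrow> y \<in> V \<Longrightarrow> f (x + y) = f x + f y"
  shows "card {z\<in>V. f z \<in> T} = card (T \<inter> f ` V) * card {z\<in>V. f z = 0}"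
proof -
  have eq: "{z\<in>V. f z \<in> T} = (\<Union>y\<in>T \<inter> f ` V. {z\<in>V. f z = y})" by auto
  have each: "card {z\<in>V. f z = y} = card {z\<in>V. f z = 0}" if y: "y \<in> f ` V" for y
  proof -
    obtain z0 where z0: "z0 \<in> V" "f z0 = y" using y by auto
    have fd: "f (z - z0) = f z - f z0" if "z \<in> V" for z
      using hom[OF subc[OF that z0(1)] z0(1)] by simp
    have "bij_betw (\<lambda>z. z - z0) {z\<in>V. f z = y} {z\<in>V. f z = 0}"
    proof (rule bij_betw_byWitness[where f'="\<lambda>u. u + z0"])
      show "\<forall>a\<in>{z \<in> V. f z = y}. a - z0 + z0 = a" by simp
      show "\<forall>a'\<in>{z \<in> V. f z = 0}. a' + z0 - z0 = a'" by simp
      show "(\<lambda>z. z - z0) ` {z \<in> V. f z = y} \<subseteq> {z \<in> V. f z = 0}"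
        using fd z0 subc by auto
      show "(\<lambda>u. u + z0) ` {z \<in> V. f z = 0} \<subseteq> {z \<in> V. f z = y}"
        using hom z0 addc by auto
    qed
    then show ?thesis by (rule bij_betw_same_card)
  qed
  have "card {z\<in>V. f z \<in> T} = (\<Sum>y\<in>T \<inter> f ` V. card {z\<in>V. f z = y})"
    unfolding eq using fin by (intro card_UN_disjoint) auto
  also have "\<dots> = (\<Sum>y\<in>T \<inter> f ` V. card {z\<in>V. f z = 0})"
    using each by (intro sum.cong) auto
  finally show ?thesis by simp
qed

lemma half_card:
  fixes f :: "'a::ab_group_add \<Rightarrow> E"
  assumes fin: "finite G"
    and addc: "\<And>x y. x \<in> G \<Longrightarrow> y \<in> G \<Longrightarrow> x + y \<in> G"
    and subc: "\<And>x y. x \<in> G \<Longrightarrow> y \<in> G \<Longrightarrow> x - y \<in> G"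
    and hom: "\<And>x y. x \<in> G \<Longrightarrow> y \<in> G \<Longrightarrow> f (x + y) = f x + f y"
    and u: "u \<in> G" "f u \<noteq> 0"
    and two: "\<And>x. x \<in> G \<Longrightarrow> f x = 0 \<or> f x = c"
  shows "card G = 2 * card {x\<in>G. f x = 0}"
proof -
  have fd: "f (z - u) = f z - f u" if "z \<in> G" for z
    using hom[OF subc[OF that u(1)] u(1)] by simp
  have "bij_betw (\<lambda>z. z + u) {x\<in>G. f x = 0} {x\<in>G. f x \<noteq> 0}"
  proof (rule bij_betw_byWitness[where f'="\<lambda>v. v - u"])
    show "\<forall>a\<in>{z \<in> G. f z = 0}. a + u - u = a" by simp
    show "\<forall>a'\<in>{z \<in> G. f z \<noteq> 0}. a' - u + u = a'" by simp
    show "(\<lambda>z. z + u) ` {z \<in> G. f z = 0} \<subseteq> {z \<in> G. f z \<noteq> 0}"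
      using hom u addc by auto
    show "(\<lambda>v. v - u) ` {z \<in> G. f z \<noteq> 0} \<subseteq> {z \<in> G. f z = 0}"
    proof
      fix v assume "v \<in> (\<lambda>v. v - u) ` {z \<in> G. f z \<noteq> 0}"
      then obtain z where z: "z \<in> G" "f z \<noteq> 0" "v = z - u" by auto
      have "f z = c" "f u = c" using two z u by blast+
      then show "v \<in> {z \<in> G. f z = 0}" using z fd subc u by auto
    qed
  qed
  then have "card {x\<in>G. f x = 0} = card {x\<in>G. f x \<noteq> 0}" by (rule bij_betw_same_card)
  moreover have "card G = card {x\<in>G. f x = 0} + card {x\<in>G. f x \<noteq> 0}"
  proof -
    have "G = {x\<in>G. f x = 0} \<union> {x\<in>G. f x \<noteq> 0}" by auto
    then show ?thesis using fin by (metis (no_types, lifting) card_Un_disjoint disjoint_iff finite_Un mem_Collect_eq)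
  qed
  ultimately show ?thesis by simp
qed

lemma E0z: "E0 = (0::E)" by (simp add: zero_E_def)

lemma E_cases4: "(x::E) = 0 \<or> x = Kappa \<or> x = Tau \<or> x = Zeta"
  by (cases x) (auto simp: zero_E_def)

lemma E_mult: "x * y = (if y = Kappa \<or> y = Tau then x else (0::E))"
  by (simp add: times_E_def zero_E_def)

lemma E_self: "(x::E) + x = 0" by (cases x) (auto simp: zero_E_def)
lemma E_minus: "(x::E) - y = x + y" by (simp add: minus_E_def)
lemma E_uminus: "- (x::E) = x" by (simp add: uminus_E_def)

lemma E_tbl [simp]:
  "Kappa + Kappa = 0" "Tau + Tau = 0" "Zeta + Zeta = 0"
  "Kappa + Tau = Zeta" "Tau + Kappa = Zeta" "Kappa + Zeta = Tau" "Zeta + Kappa = Tau"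
  "Tau + Zeta = Kappa" "Zeta + Tau = Kappa"
  "Kappa \<noteq> 0" "Tau \<noteq> 0" "Zeta \<noteq> 0" "0 \<noteq> Kappa" "0 \<noteq> Tau" "0 \<noteq> Zeta"
  by (simp_all add: zero_E_def)

definition ph :: "E \<Rightarrow> bool" where "ph x \<longleftrightarrow> x = Kappa \<or> x = Tau"
definition pk :: "E \<Rightarrow> E" where "pk x = (if x = Kappa \<or> x = Zeta then Kappa else 0)"
definition pt :: "E \<Rightarrow> E" where "pt x = (if x = Tau \<or> x = Zeta then Kappa else 0)"

lemma pk_add: "pk (x + y) = pk x + pk y"
  using E_cases4[of x] E_cases4[of y] by (auto simp: pk_def zero_E_def)
lemma pt_add: "pt (x + y) = pt x + pt y"
  using E_cases4[of x] E_cases4[of y] by (auto simp: pt_def zero_E_def)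
lemma pk_mult: "pk (x * y) = pk x * y" by (auto simp: pk_def E_mult)
lemma pt_mult: "pt (x * y) = pt x * y" by (auto simp: pt_def E_mult)
lemma pk0: "pk 0 = 0" by (simp add: pk_def)
lemma pt0: "pt 0 = 0" by (simp add: pt_def)
lemma pkpt0: "(x::E) = 0 \<longleftrightarrow> pk x = 0 \<and> pt x = 0"
  using E_cases4[of x] by (auto simp: pk_def pt_def)
lemma pt0_iff: "pt x = 0 \<longleftrightarrow> x = 0 \<or> x = Kappa"
  using E_cases4[of x] by (auto simp: pt_def)
lemma pt_via_pk: "pt x = pk (x + Kappa * x)"
  using E_cases4[of x] by (auto simp: pk_def pt_def E_mult)

lemma symp_morph:
  assumes "h 0 = 0" "\<And>x y. h (x + y) = h x + h y" "\<And>x y. h (x * y) = h x * y"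
  shows "h (symp n w z) = symp n (\<lambda>i. h (w i)) z"
proof -
  have s: "h (sum g A) = sum (\<lambda>i. h (g i)) A" for g :: "nat \<Rightarrow> E" and A
    using sum_comp_morphism[of h g A, OF assms(1,2)] by (simp add: o_def)
  show ?thesis unfolding symp_def assms(2) s assms(3) ..
qed

lemma symp_kap: "symp n w (\<lambda>i. Kappa * z i) = symp n w z"
proof -
  have "x * (Kappa * y) = x * y" for x y :: E
    by (metis E_mult mult.assoc)
  then show ?thesis by (simp add: symp_def)
qed

lemma symp_add_left: "symp n (\<lambda>i. x i + y i) z = symp n x z + symp n y z"
  by (simp add: symp_def distrib_right sum.distrib algebra_simps)
lemma symp_add_right: "symp n z (\<lambda>i. x i + y i) = symp n z x + symp n z y"
  by (simp add: symp_def distrib_left sum.distrib algebra_simps)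

definition unitv :: "nat \<Rightarrow> E \<Rightarrow> nat \<Rightarrow> E" where
  "unitv j c = (\<lambda>m. if m = j then c else 0)"


lemma symp_unit_right:
  "symp n w (unitv j c) = (if n \<le> j \<and> j < 2*n then w (j-n) * c else 0) + (if j < n then w (n+j) * c else 0)"
proof -
  have 1: "(\<Sum>i<n. w i * unitv j c (n+i)) = (\<Sum>i<n. if i = j - n then (if n \<le> j then w (j-n) * c else 0) else 0)"
    by (rule sum.cong) (auto simp: unitv_def)
  have 2: "(\<Sum>i<n. w (n+i) * unitv j c i) = (\<Sum>i<n. if i = j then w (n+j) * c else 0)"
    by (rule sum.cong) (auto simp: unitv_def)
  have 3: "(\<Sum>i<n. if i = j - n then (if n \<le> j then w (j-n) * c else 0) else 0) = (if n \<le> j \<and> j < 2*n then w (j-n) * c else 0)"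
    by (subst sum.delta) auto
  have 4: "(\<Sum>i<n. if i = j then w (n+j) * c else 0) = (if j < n then w (n+j) * c else 0)"
    by (subst sum.delta) auto
  show ?thesis unfolding symp_def 1 2 3 4 ..
qed

lemma symp_unit_left:
  "symp n (unitv j c) w = (if j < n then c * w (n+j) else 0) + (if n \<le> j \<and> j < 2*n then c * w (j-n) else 0)"
proof -
  have 1: "(\<Sum>i<n. unitv j c (n+i) * w i) = (\<Sum>i<n. if i = j - n then (if n \<le> j then c * w (j-n) else 0) else 0)"
    by (rule sum.cong) (auto simp: unitv_def)
  have 2: "(\<Sum>i<n. unitv j c i * w (n+i)) = (\<Sum>i<n. if i = j then c * w (n+j) else 0)"
    by (rule sum.cong) (auto simp: unitv_def)
  have 3: "(\<Sum>i<n. if i = j - n then (if n \<le> j then c * w (j-n) else 0) else 0) = (if n \<le> j \<and> j < 2*n then c * w (j-n) else 0)"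
    by (subst sum.delta) auto
  have 4: "(\<Sum>i<n. if i = j then c * w (n+j) else 0) = (if j < n then c * w (n+j) else 0)"
    by (subst sum.delta) auto
  show ?thesis unfolding symp_def 1 2 3 4 ..
qed

lemma fun_add_E: "(x + y :: nat \<Rightarrow> E) = (\<lambda>i. x i + y i)" by (simp add: plus_fun_def)
lemma fun_sub_E: "(x - y :: nat \<Rightarrow> E) = (\<lambda>i. x i + y i)" by (simp add: fun_eq_iff E_minus)

lemma V_add: "x \<in> Espace n \<Longrightarrow> y \<in> Espace n \<Longrightarrow> x + y \<in> Espace n"
  by (simp add: Espace_def)
lemma V_sub: "x \<in> Espace n \<Longrightarrow> y \<in> Espace n \<Longrightarrow> x - y \<in> Espace n"
  by (simp add: Espace_def fun_sub_E)

lemma V_img: "Espace n = (\<lambda>f i. if i < 2*n then f i else 0) ` (PiE {..<2*n} (\<lambda>_. UNIV))"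
proof
  show "Espace n \<subseteq> (\<lambda>f i. if i < 2*n then f i else 0) ` (PiE {..<2*n} (\<lambda>_. UNIV))"
  proof
    fix x assume x: "x \<in> Espace n"
    have "x = (\<lambda>i. if i < 2*n then restrict x {..<2*n} i else 0)"
      using x by (auto simp: Espace_def fun_eq_iff)
    then show "x \<in> (\<lambda>f i. if i < 2*n then f i else 0) ` (PiE {..<2*n} (\<lambda>_. UNIV))"
      by (intro image_eqI[where x="restrict x {..<2*n}"]) auto
  qed
  show "(\<lambda>f i. if i < 2*n then f i else 0) ` (PiE {..<2*n} (\<lambda>_. UNIV)) \<subseteq> Espace n"
    unfolding Espace_def by (rule image_subsetI) simp
qed

lemma V_inj: "inj_on (\<lambda>f (i::nat). if i < 2*(n::nat) then f i else (0::E)) (PiE {..<2*n} (\<lambda>_. UNIV))"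
proof (rule inj_onI)
  fix f g :: "nat \<Rightarrow> E"
  assume f: "f \<in> PiE {..<2*n} (\<lambda>_. UNIV :: E set)" and g: "g \<in> PiE {..<2*n} (\<lambda>_. UNIV :: E set)"
    and eq: "(\<lambda>i. if i < 2*n then f i else 0) = (\<lambda>i. if i < 2*n then g i else 0)"
  show "f = g"
  proof
    fix i show "f i = g i"
    proof (cases "i < 2*n")
      case True then show ?thesis using fun_cong[OF eq, of i] by simp
    next
      case False then show ?thesis using f g by (auto simp: PiE_def extensional_def)
    qed
  qed
qed

lemma finite_UNIV_E: "finite (UNIV :: E set)"
proof -
  have "UNIV = {E0, Kappa, Tau, Zeta}" by (auto intro: E.exhaust)
  then show ?thesis by (metis finite.emptyI finite.insertI)
qed

lemma V_card: "card (Espace n) = card (UNIV :: E set) ^ (2*n)"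
  unfolding V_img by (subst card_image[OF V_inj]) (simp add: card_PiE)

lemma V_fin: "finite (Espace n)"
  unfolding V_img using finite_UNIV_E by (intro finite_imageI finite_PiE) auto

definition Kset :: "nat \<Rightarrow> (nat \<Rightarrow> E) set" where
  "Kset n = {k \<in> Espace n. \<forall>i. k i = 0 \<or> k i = Kappa}"
definition Zset :: "nat \<Rightarrow> (nat \<Rightarrow> E) set" where
  "Zset n = {k \<in> Espace n. \<forall>i. k i = 0 \<or> k i = Zeta}"
definition perpK :: "nat \<Rightarrow> (nat \<Rightarrow> E) set \<Rightarrow> (nat \<Rightarrow> E) set" where
  "perpK n A = {k \<in> Kset n. \<forall>a\<in>A. symp n a k = 0}"

lemma K_add: "x \<in> Kset n \<Longrightarrow> y \<in> Kset n \<Longrightarrow> x + y \<in> Kset n"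
  unfolding Kset_def using V_add by (auto simp: fun_add_E) (metis E_self E_tbl(10) add_0 add.right_neutral)+

lemma K_sub: "x \<in> Kset n \<Longrightarrow> y \<in> Kset n \<Longrightarrow> x - y \<in> Kset n"
  using K_add by (simp add: fun_sub_E fun_add_E[symmetric])

lemma K_fin: "finite (Kset n)" using V_fin by (simp add: Kset_def)

lemma symp_zero_left: "symp n (\<lambda>i. 0) z = 0" by (simp add: symp_def)
lemma symp_zero_right: "symp n z (\<lambda>i. 0) = 0" by (simp add: symp_def)

lemma symp_K: assumes "a \<in> Kset n" shows "symp n a k = 0 \<or> symp n a k = Kappa"
proof -
  have "pt (symp n a k) = symp n (\<lambda>i. pt (a i)) k"
    by (rule symp_morph) (auto simp: pt0 pt_add pt_mult)
  also have "(\<lambda>i. pt (a i)) = (\<lambda>i. 0)" using assms by (auto simp: Kset_def pt0_iff fun_eq_iff)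
  finally show ?thesis using pt0_iff symp_zero_left by metis
qed

lemma card_filter_sum: "finite A \<Longrightarrow> card {x\<in>A. P x} = (\<Sum>x\<in>A. if P x then 1 else 0)"
  by (simp add: sum.If_cases Int_def conj_commute)

lemma K_nonzero_witness:
  assumes a: "a \<in> Kset n" "a \<noteq> 0"
  shows "\<exists>g\<in>Kset n. symp n a g \<noteq> 0"
proof -
  obtain i where i: "a i \<noteq> 0" using a(2) by (auto simp: fun_eq_iff)
  have ai: "a i = Kappa" using i a(1) by (auto simp: Kset_def)
  have i2: "i < 2*n" using i a(1) unfolding Kset_def Espace_def by (auto simp: not_less[symmetric])
  define j where "j = (if i < n then n + i else i - n)"
  have j2: "j < 2*n" using i2 by (auto simp: j_def)
  have gK: "unitv j Kappa \<in> Kset n" using j2 by (auto simp: Kset_def Espace_def unitv_def)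
  have "symp n a (unitv j Kappa) = Kappa"
    unfolding symp_unit_right using i2 ai by (auto simp: j_def E_mult)
  then show ?thesis using gK by (intro bexI[of _ "unitv j Kappa"]) simp_all
qed

lemma duality:
  assumes AK: "A \<subseteq> Kset n" and A0: "0 \<in> A"
    and Aadd: "\<And>x y. x \<in> A \<Longrightarrow> y \<in> A \<Longrightarrow> x + y \<in> A"
  shows "card A * card (perpK n A) = card (Kset n)"
proof -
  define K where "K = Kset n"
  define P where "P = perpK n A"
  have finK: "finite K" using K_fin by (simp add: K_def)
  have finA: "finite A" using AK K_fin finite_subset by blast
  have PK: "P \<subseteq> K" by (auto simp: P_def K_def perpK_def)
  have finP: "finite P" using PK finK finite_subset by blast
  have Asub: "\<And>x y. x \<in> A \<Longrightarrow> y \<in> A \<Longrightarrow> x - y \<in> A"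
    using Aadd by (simp add: fun_sub_E fun_add_E[symmetric])
  have S1: "(\<Sum>k\<in>K. card {a\<in>A. symp n a k = 0}) = (\<Sum>a\<in>A. card {k\<in>K. symp n a k = 0})"
    using finA finK by (simp add: card_filter_sum) (rule sum.swap)
  have S2: "2 * card {a\<in>A. symp n a k = 0} = (if k \<in> P then 2 * card A else card A)" if k: "k \<in> K" for k
  proof (cases "k \<in> P")
    case True
    then have "{a\<in>A. symp n a k = 0} = A" by (auto simp: P_def perpK_def)
    then show ?thesis using True by simp
  next
    case False
    then obtain g0 where g0: "g0 \<in> A" "symp n g0 k \<noteq> 0" using k by (auto simp: P_def perpK_def K_def)
    have "card A = 2 * card {a\<in>A. symp n a k = 0}"
    proof (rule half_card[where u=g0 and c=Kappa])
      show "finite A" by (rule finA)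
      show "\<And>x y. x \<in> A \<Longrightarrow> y \<in> A \<Longrightarrow> x + y \<in> A" by (rule Aadd)
      show "\<And>x y. x \<in> A \<Longrightarrow> y \<in> A \<Longrightarrow> x - y \<in> A" by (rule Asub)
      show "\<And>x y. x \<in> A \<Longrightarrow> y \<in> A \<Longrightarrow> symp n (x + y) k = symp n x k + symp n y k"
        by (simp add: fun_add_E symp_add_left)
      show "g0 \<in> A" "symp n g0 k \<noteq> 0" by (rule g0)+
      show "\<And>x. x \<in> A \<Longrightarrow> symp n x k = 0 \<or> symp n x k = Kappa"
        using AK symp_K by blast
    qed
    then show ?thesis using False by simp
  qed
  have S3: "2 * card {k\<in>K. symp n a k = 0} = (if a = 0 then 2 * card K else card K)" if a: "a \<in> A" for a
  proof (cases "a = 0")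
    case True
    then have "{k\<in>K. symp n a k = 0} = K" by (auto simp: symp_zero_left zero_fun_def)
    then show ?thesis using True by simp
  next
    case False
    then obtain g0 where g0: "g0 \<in> K" "symp n a g0 \<noteq> 0"
      using K_nonzero_witness[of a n] a AK by (auto simp: K_def)
    have "card K = 2 * card {k\<in>K. symp n a k = 0}"
    proof (rule half_card[where u=g0 and c=Kappa])
      show "finite K" by (rule finK)
      show "\<And>x y. x \<in> K \<Longrightarrow> y \<in> K \<Longrightarrow> x + y \<in> K" by (simp add: K_def K_add)
      show "\<And>x y. x \<in> K \<Longrightarrow> y \<in> K \<Longrightarrow> x - y \<in> K" by (simp add: K_def K_sub)
      show "\<And>x y. x \<in> K \<Longrightarrow> y \<in> K \<Longrightarrow> symp n a (x + y) = symp n a x + symp n a y"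
        by (simp add: fun_add_E symp_add_right)
      show "g0 \<in> K" "symp n a g0 \<noteq> 0" by (rule g0)+
      show "\<And>x. x \<in> K \<Longrightarrow> symp n a x = 0 \<or> symp n a x = Kappa"
        using AK symp_K a by blast
    qed
    then show ?thesis using False by simp
  qed
  have L: "2 * (\<Sum>k\<in>K. card {a\<in>A. symp n a k = 0}) = 2 * card A * card P + card A * (card K - card P)"
  proof -
    have "2 * (\<Sum>k\<in>K. card {a\<in>A. symp n a k = 0}) = (\<Sum>k\<in>K. if k \<in> P then 2 * card A else card A)"
      using S2 by (simp add: sum_distrib_left)
    also have "\<dots> = (\<Sum>k\<in>P. 2 * card A) + (\<Sum>k\<in>K - P. card A)"
      using finK PK by (simp add: sum.If_cases Int_absorb1 Diff_eq)
    also have "\<dots> = 2 * card A * card P + card A * (card K - card P)"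
      using PK finP by (simp add: card_Diff_subset)
    finally show ?thesis .
  qed
  have R: "2 * (\<Sum>a\<in>A. card {k\<in>K. symp n a k = 0}) = 2 * card K + card K * (card A - 1)"
  proof -
    have "2 * (\<Sum>a\<in>A. card {k\<in>K. symp n a k = 0}) = (\<Sum>a\<in>A. if a = 0 then 2 * card K else card K)"
      using S3 by (simp add: sum_distrib_left)
    also have "\<dots> = 2 * card K + (\<Sum>a\<in>A - {0}. card K)"
    proof -
      have "A \<inter> {a. a = 0} = {0}" using A0 by auto
      moreover have "A \<inter> - {a. a = 0} = A - {0}" by auto
      ultimately show ?thesis using finA by (simp add: sum.If_cases)
    qed
    also have "\<dots> = 2 * card K + card K * (card A - 1)"
      using finA A0 by (simp add: card_Diff_singleton_if)
    finally show ?thesis .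
  qed
  have pk: "card P \<le> card K" using PK finK card_mono by blast
  have a1: "card A \<ge> 1" using A0 finA by (metis One_nat_def Suc_leI card_gt_0_iff empty_iff)
  have "2 * card A * card P + card A * (card K - card P) = 2 * card K + card K * (card A - 1)"
    using L R S1 by simp
  then have "card A * card P = card K"
  proof -
    assume h: "2 * card A * card P + card A * (card K - card P) = 2 * card K + card K * (card A - 1)"
    obtain d where d: "card K = card P + d" using pk le_Suc_ex by blast
    obtain b where b: "card A = b + 1" using a1 by (metis add.commute le_Suc_ex)
    show ?thesis using h unfolding d b by (simp add: algebra_simps)
  qed
  then show ?thesis by (simp add: P_def K_def)
qed

lemma mult_zero_if: "Kappa * y = 0 \<Longrightarrow> (x::E) * y = 0"
  by (auto simp: E_mult split: if_splits)

lemma part1: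
  assumes C: "E_linear_code n C"
  shows "symp_perp_R n C = symp_perp n C \<longleftrightarrow> (\<forall>w\<in>C. \<forall>i. Kappa * w i = 0)"
proof
  assume h: "\<forall>w\<in>C. \<forall>i. Kappa * w i = 0"
  have "symp_perp_R n C \<subseteq> symp_perp_L n C"
  proof
    fix z assume z: "z \<in> symp_perp_R n C"
    have "symp n z w = 0" if w: "w \<in> C" for w
      using h w by (simp add: symp_def mult_zero_if)
    then show "z \<in> symp_perp_L n C" using z by (auto simp: symp_perp_L_def symp_perp_R_def)
  qed
  then show "symp_perp_R n C = symp_perp n C" by (auto simp: symp_perp_def)
next
  assume eq: "symp_perp_R n C = symp_perp n C"
  show "\<forall>w\<in>C. \<forall>i. Kappa * w i = 0"
  proof (rule ccontr)
    assume "\<not> ?thesis"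
    then obtain w i where w: "w \<in> C" and wi: "Kappa * w i \<noteq> 0" by auto
    have wph: "w i = Kappa \<or> w i = Tau" using wi by (auto simp: E_mult split: if_splits)
    have wV: "w \<in> Espace n" using C w by (auto simp: E_linear_code_def)
    have "w i \<noteq> 0" using wph by auto
    then have i2: "i < 2*n" using wV unfolding Espace_def by (auto simp: not_less[symmetric])
    define j where "j = (if i < n then n + i else i - n)"
    have j2: "j < 2*n" using i2 by (auto simp: j_def)
    define z where "z = unitv j Zeta"
    have zV: "z \<in> Espace n" using j2 by (auto simp: Espace_def z_def unitv_def)
    have zR: "z \<in> symp_perp_R n C"
      using zV by (auto simp: symp_perp_R_def z_def symp_unit_right E_mult)
    have "symp n z w = Zeta"
      using i2 wph unfolding z_def symp_unit_left by (auto simp: j_def E_mult)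
    then have "z \<notin> symp_perp_L n C"
    proof -
      assume zz: "symp n z w = Zeta"
      show "z \<notin> symp_perp_L n C"
      proof
        assume "z \<in> symp_perp_L n C"
        then have "symp n z w = 0" using w by (auto simp: symp_perp_L_def)
        then show False using zz by simp
      qed
    qed
    then show False using zR eq unfolding symp_perp_def by blast
  qed
qed

lemma part2:
  assumes C: "E_linear_code n C"
  shows "right_symplectic_nice n C \<longleftrightarrow> (\<forall>w\<in>C. \<forall>i. Kappa * w i = 0)"
proof -
  define V where "V = Espace n"
  define kap where "kap = (\<lambda>(w::nat \<Rightarrow> E) i. Kappa * w i)"
  define pkv where "pkv = (\<lambda>(w::nat \<Rightarrow> E) i. pk (w i))"
  define D where "D = kap ` C"
  define A where "A = pkv ` C"
  define R where "R = symp_perp_R n C"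
  have CV: "C \<subseteq> V" and C0: "(\<lambda>_. 0) \<in> C"
    and Cadd: "\<And>x y. x \<in> C \<Longrightarrow> y \<in> C \<Longrightarrow> (\<lambda>i. x i + y i) \<in> C"
    and Csc: "\<And>e x. x \<in> C \<Longrightarrow> (\<lambda>i. e * x i) \<in> C"
    using C by (auto simp: E_linear_code_def V_def)
  have finV: "finite V" by (simp add: V_def V_fin)
  have finC: "finite C" using CV finV finite_subset by blast
  have Cadd': "\<And>x y. x \<in> C \<Longrightarrow> y \<in> C \<Longrightarrow> x + y \<in> C" using Cadd by (simp add: fun_add_E)
  have Csub': "\<And>x y. x \<in> C \<Longrightarrow> y \<in> C \<Longrightarrow> x - y \<in> C" using Cadd by (simp add: fun_sub_E)
  have kap_add: "kap (x + y) = kap x + kap y" for x y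
    by (simp add: kap_def fun_add_E distrib_left)
  have pkv_add: "pkv (x + y) = pkv x + pkv y" for x y
    by (simp add: pkv_def fun_add_E pk_add)
  have c1: "card C = card A * card {w\<in>C. pkv w = 0}"
    using fiber_card[of C pkv UNIV, OF finC Cadd' Csub'] pkv_add by (simp add: A_def)
  have c2: "card {w\<in>C. pkv w = 0} = card D"
  proof (rule bij_betw_same_card)
    show "bij_betw kap {w\<in>C. pkv w = 0} D"
    proof (rule bij_betw_byWitness[where f'="\<lambda>w i. Tau * w i"])
      show "\<forall>a\<in>{w \<in> C. pkv w = 0}. (\<lambda>i. Tau * kap a i) = a"
      proof
        fix a assume a: "a \<in> {w \<in> C. pkv w = 0}"
        have ai: "a i = 0 \<or> a i = Tau" for i
        proof -
          have "pkv a = 0" using a by blast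
          then have "pkv a i = 0" by (simp only: zero_fun_apply)
          then have "pk (a i) = 0" by (simp only: pkv_def)
          then show ?thesis using E_cases4[of "a i"] by (auto simp: pk_def)
        qed
        have tk: "Tau * (Kappa * x) = x" if "x = 0 \<or> x = Tau" for x :: E
          using that by (auto simp: E_mult)
        show "(\<lambda>i. Tau * kap a i) = a" by (simp add: fun_eq_iff kap_def tk ai)
      qed
      show "\<forall>a'\<in>D. kap (\<lambda>i. Tau * a' i) = a'"
        by (auto simp: D_def kap_def fun_eq_iff E_mult)
      show "kap ` {w \<in> C. pkv w = 0} \<subseteq> D" by (auto simp: D_def)
      show "(\<lambda>w i. Tau * w i) ` D \<subseteq> {w \<in> C. pkv w = 0}"
      proof
        fix x assume "x \<in> (\<lambda>w i. Tau * w i) ` D"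
        then obtain w where w: "w \<in> C" "x = (\<lambda>i. Tau * (Kappa * w i))" by (auto simp: D_def kap_def)
        have "x = (\<lambda>i. Tau * w i)" using w(2) by (auto simp: fun_eq_iff E_mult)
        then have "x \<in> C" using Csc w(1) by simp
        moreover have "pkv x = 0" using w(2) by (auto simp: pkv_def pk_def fun_eq_iff E_mult)
        ultimately show "x \<in> {w \<in> C. pkv w = 0}" by simp
      qed
    qed
  qed
  have kapV: "kap ` V = Kset n"
  proof
    show "kap ` V \<subseteq> Kset n"
      by (auto simp: kap_def V_def Kset_def Espace_def E_mult)
    show "Kset n \<subseteq> kap ` V"
    proof
      fix k assume k: "k \<in> Kset n"
      have kk: "Kappa * x = x" if "x = 0 \<or> x = Kappa" for x :: E
        using that by (auto simp: E_mult)
      have "kap k = k" using k by (simp add: Kset_def kap_def fun_eq_iff kk)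
      moreover have "k \<in> V" using k by (simp add: Kset_def V_def)
      ultimately show "k \<in> kap ` V" by (metis image_eqI)
    qed
  qed
  have kerkap: "{z\<in>V. kap z = 0} = Zset n"
  proof -
    have kz: "Kappa * x = 0 \<longleftrightarrow> x = 0 \<or> x = Zeta" for x :: E
      using E_cases4[of x] by (auto simp: E_mult)
    have "kap z = 0 \<longleftrightarrow> (\<forall>i. z i = 0 \<or> z i = Zeta)" for z
      by (simp add: kap_def fun_eq_iff kz)
    then show ?thesis by (auto simp: Zset_def V_def)
  qed
  have Vadd: "\<And>x y. x \<in> V \<Longrightarrow> y \<in> V \<Longrightarrow> x + y \<in> V" by (simp add: V_def V_add)
  have Vsub: "\<And>x y. x \<in> V \<Longrightarrow> y \<in> V \<Longrightarrow> x - y \<in> V" by (simp add: V_def V_sub)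
  have c4: "card V = card (Kset n) * card (Zset n)"
    using fiber_card[of V kap UNIV, OF finV Vadd Vsub] kap_add kapV kerkap by simp
  have key: "(\<forall>w\<in>C. symp n w z = 0) \<longleftrightarrow> (\<forall>a\<in>A. symp n a z = 0)" for z
  proof
    assume h: "\<forall>w\<in>C. symp n w z = 0"
    show "\<forall>a\<in>A. symp n a z = 0"
    proof
      fix a assume "a \<in> A"
      then obtain w where w: "w \<in> C" "a = pkv w" by (auto simp: A_def)
      have "pk (symp n w z) = symp n (\<lambda>i. pk (w i)) z"
        by (rule symp_morph) (auto simp: pk0 pk_add pk_mult)
      then show "symp n a z = 0" using h w by (simp add: pkv_def pk0)
    qed
  next
    assume h: "\<forall>a\<in>A. symp n a z = 0"
    show "\<forall>w\<in>C. symp n w z = 0"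
    proof
      fix w assume w: "w \<in> C"
      have 1: "pk (symp n w z) = symp n (\<lambda>i. pk (w i)) z"
        by (rule symp_morph) (auto simp: pk0 pk_add pk_mult)
      have 2: "pt (symp n w z) = symp n (\<lambda>i. pt (w i)) z"
        by (rule symp_morph) (auto simp: pt0 pt_add pt_mult)
      have "pkv w \<in> A" using w by (simp add: A_def)
      then have a1: "pk (symp n w z) = 0" using 1 h by (simp add: pkv_def)
      have "(\<lambda>i. w i + Kappa * w i) \<in> C" using Cadd Csc w by blast
      then have "pkv (\<lambda>i. w i + Kappa * w i) \<in> A" by (simp add: A_def)
      moreover have "pkv (\<lambda>i. w i + Kappa * w i) = (\<lambda>i. pt (w i))"
        by (simp add: pkv_def pt_via_pk)
      ultimately have a2: "pt (symp n w z) = 0" using 2 h by simp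
      show "symp n w z = 0" using a1 a2 pkpt0 by blast
    qed
  qed
  have RV: "R = {z\<in>V. kap z \<in> perpK n A}"
  proof -
    have "z \<in> V \<Longrightarrow> kap z \<in> Kset n" for z using kapV by blast
    moreover have "symp n a (kap z) = symp n a z" for a z by (simp add: kap_def symp_kap)
    ultimately show ?thesis
      by (auto simp: R_def symp_perp_R_def perpK_def V_def key)
  qed
  have c3: "card R = card (perpK n A) * card (Zset n)"
  proof -
    have "perpK n A \<inter> kap ` V = perpK n A" using kapV by (auto simp: perpK_def)
    then show ?thesis
      using fiber_card[of V kap "perpK n A", OF finV Vadd Vsub] kap_add kerkap RV by simp
  qed
  have c5: "card A * card (perpK n A) = card (Kset n)"
  proof (rule duality)
    show "A \<subseteq> Kset n"
    proof
      fix a assume "a \<in> A"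
      then obtain w where w: "w \<in> C" "a = pkv w" by (auto simp: A_def)
      have "w \<in> Espace n" using w CV by (auto simp: V_def)
      then show "a \<in> Kset n" using w by (auto simp: Kset_def Espace_def pkv_def pk_def)
    qed
    show "0 \<in> A" using C0 unfolding A_def pkv_def
      by (intro image_eqI[where x="\<lambda>_. 0"]) (auto simp: pk0 zero_fun_def)
    show "x + y \<in> A" if xA: "x \<in> A" and yA: "y \<in> A" for x y
    proof -
      obtain x' where x': "x' \<in> C" "x = pkv x'" using xA unfolding A_def by blast
      obtain y' where y': "y' \<in> C" "y = pkv y'" using yA unfolding A_def by blast
      from x' y' have "x + y = pkv (x' + y')" "x' + y' \<in> C" using pkv_add Cadd' by auto
      then show ?thesis by (auto simp: A_def)
    qed
  qed
  have prod: "card C * card R = card D * card V"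
  proof -
    have "card C * card R = card D * (card A * card (perpK n A)) * card (Zset n)"
      unfolding c1 c2 c3 by (simp add: ac_simps)
    also have "\<dots> = card D * card V" unfolding c5 c4 by (simp add: ac_simps)
    finally show ?thesis .
  qed
  have "(\<lambda>_. 0) \<in> V" by (simp add: V_def Espace_def)
  then have Vpos: "card V > 0" using finV card_gt_0_iff by blast
  have nice: "right_symplectic_nice n C \<longleftrightarrow> card D = 1"
    unfolding right_symplectic_nice_def R_def[symmetric] prod V_card[symmetric] V_def[symmetric]
    using Vpos by simp
  have finD: "finite D" using finC by (simp add: D_def)
  have kap0: "kap (\<lambda>_. 0) = (\<lambda>_. 0)" by (simp add: kap_def E_mult)
  have "card D = 1 \<longleftrightarrow> (\<forall>w\<in>C. kap w = (\<lambda>_. 0))"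
  proof
    assume "card D = 1"
    then obtain x where "D = {x}" by (metis card_1_singletonE)
    moreover have "(\<lambda>_. 0) \<in> D" using C0 kap0 by (metis D_def image_eqI)
    ultimately show "\<forall>w\<in>C. kap w = (\<lambda>_. 0)" by (auto simp: D_def)
  next
    assume "\<forall>w\<in>C. kap w = (\<lambda>_. 0)"
    then have "D = {\<lambda>_. 0}" using C0 by (auto simp: D_def)
    then show "card D = 1" by simp
  qed
  then show ?thesis unfolding nice by (simp add: kap_def fun_eq_iff)
qed

theorem mainTheorem11:
  fixes n :: nat and C :: "(nat \<Rightarrow> E) set"
  assumes "E_linear_code n C"
  shows "symp_perp_R n C = symp_perp n C \<longleftrightarrow> right_symplectic_nice n C"
  using part1[OF assms] part2[OF assms] by simp

end
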